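(* For every prime power $q$ and every integer $h\geq 2$, there exists a $2$-fold blocking set of size $2(q^h+q^{h-1}+1)$ in $\mathrm{PG}(2,q^h)$.
   Context: A $2$-fold blocking set is a point set meeting every line in at least $2$ points. *)

theory Defs
  imports Main "HOL-Computational_Algebra.Primes"
begin

text \<open>A point is the set of nonzero scalar multiples of a nonzero vector (a 1-dimensional
  subspace minus 0); a line is the set of points whose vectors satisfy a nontrivial
  homogeneous linear equation.\<close>

definition pg_point :: "'a::field \<times> 'a \<times> 'a \<Rightarrow> ('a \<times> 'a \<times> 'a) set" where
  "pg_point v = {(c * fst v, c * fst (snd v), c * snd (snd v)) | c. c \<noteq> 0}"

definition pg_points :: "('a::field \<times> 'a \<times> 'a) set set" where
  "pg_points = pg_point ` (UNIV - {(0, 0, 0)})"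

definition pg_line :: "'a::field \<times> 'a \<times> 'a \<Rightarrow> ('a \<times> 'a \<times> 'a) set set" where
  "pg_line a = {pg_point (x, y, z) | x y z. (x, y, z) \<noteq> (0, 0, 0) \<and>
      fst a * x + fst (snd a) * y + snd (snd a) * z = 0}"

definition pg_lines :: "('a::field \<times> 'a \<times> 'a) set set set" where
  "pg_lines = pg_line ` (UNIV - {(0, 0, 0)})"

definition fold_blocking_set :: "nat \<Rightarrow> ('a::field \<times> 'a \<times> 'a) set set \<Rightarrow> bool" where
  "fold_blocking_set t B \<longleftrightarrow> B \<subseteq> pg_points \<and> (\<forall>L\<in>pg_lines. card (B \<inter> L) \<ge> t)"

end

theory Submission
  imports Defs "HOL-Number_Theory.Residues" "HOL-Computational_Algebra.Polynomial"
begin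

definition Kq :: "nat \<Rightarrow> 'a::field set" where "Kq q = {t. t ^ q = t}"

definition trf :: "nat \<Rightarrow> nat \<Rightarrow> 'a::field \<Rightarrow> 'a \<Rightarrow> 'a" where
  "trf q h c x = (\<Sum>i<h. (c * x) ^ (q ^ i))"

lemma pow_card_same:
  fixes x :: "'a::{finite,field}"
  shows "x ^ card (UNIV :: 'a set) = x"
proof (cases "x = 0")
  case False
  have "x * (\<Prod>y\<in>UNIV-{0}. x * y) = x * x ^ (card (UNIV :: 'a set) - 1) * \<Prod>(UNIV-{0})"
    by (simp add: prod.distrib mult_ac)
  also have "x * x ^ (card (UNIV :: 'a set) - 1) = x ^ Suc (card (UNIV :: 'a set) - 1)"
    by (subst power_Suc) auto
  also have "Suc (card (UNIV :: 'a set) - 1) = card (UNIV :: 'a set)"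
    using finite_UNIV_card_ge_0[where ?'a = 'a] by simp
  also have "(\<Prod>y\<in>UNIV-{0}. x * y) = (\<Prod>y\<in>UNIV-{0}. y)"
    by (rule prod.reindex_bij_witness[of _ "\<lambda>y. y / x" "\<lambda>y. x * y"]) (use False in auto)
  finally show ?thesis
    by simp
qed (use finite_UNIV_card_ge_0[where ?'a = 'a] in auto)

lemma char_eq:
  assumes "prime p" "card (UNIV::'a::{finite,field} set) = p ^ n" "n > 0"
  shows "CHAR('a) = p"
proof -
  have pc: "prime CHAR('a)"
    using prime_CHAR_semidom[where ?'a='a] finite_imp_CHAR_pos[where ?'a='a] by simp
  have "CHAR('a) dvd p ^ n" using CHAR_dvd_CARD[where ?'a='a] assms by metis
  then have "CHAR('a) dvd p" using pc prime_dvd_power by blast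
  then show ?thesis using pc assms(1) primes_dvd_imp_eq by blast
qed

context
  fixes p k h :: nat
  assumes pr: "prime p" and k1: "k \<ge> 1" and h2: "h \<ge> 2"
    and cardF: "card (UNIV :: 'a::{finite,field} set) = (p ^ k) ^ h"
begin

lemma CHAR_is: "CHAR('a) = p"
  using char_eq[OF pr, of "k*h"] cardF k1 h2 by (simp add: power_mult)

lemma frob_add: "((x::'a) + y) ^ ((p^k)^i) = x ^ ((p^k)^i) + y ^ ((p^k)^i)"
proof -
  have "(p^k)^i = CHAR('a) ^ (k*i)" by (simp add: CHAR_is power_mult)
  then show ?thesis using freshmans_dream'[where ?'a='a] CHAR_is pr by metis
qed

lemma frob_sum: "(sum (g::'b \<Rightarrow> 'a) A) ^ ((p^k)^i) = (\<Sum>j\<in>A. g j ^ ((p^k)^i))"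
proof -
  have "(p^k)^i = CHAR('a) ^ (k*i)" by (simp add: CHAR_is power_mult)
  then show ?thesis using freshmans_dream_sum'[where ?'a='a] CHAR_is pr by metis
qed

lemma frob_neg: "(- (x::'a)) ^ ((p^k)^i) = - (x ^ ((p^k)^i))"
proof -
  have n0: "(p^k)^i \<noteq> 0" using pr prime_gt_0_nat by simp
  have "(x + - x) ^ ((p^k)^i) = x ^ ((p^k)^i) + (- x) ^ ((p^k)^i)" by (rule frob_add)
  moreover have "(0::'a) ^ ((p^k)^i) = 0" using n0 by (simp add: power_0_left)
  ultimately have "x ^ ((p^k)^i) + (- x) ^ ((p^k)^i) = 0" by simp
  then show ?thesis by (simp add: add_eq_0_iff)
qed

lemma pow_Q: "(x::'a) ^ ((p^k)^h) = x"
  using pow_card_same[of x] cardF by simp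

end

context
  fixes p k h q :: nat
  assumes pr: "prime p" and k1: "k \<ge> 1" and h2: "h \<ge> 2" and qdef: "q = p ^ k"
    and cardF: "card (UNIV :: 'a::{finite,field} set) = q ^ h"
begin

lemma q2: "q \<ge> 2"
proof -
  have "p \<ge> 2" using pr prime_ge_2_nat by blast
  moreover have "p ^ 1 \<le> p ^ k" using k1 pr prime_gt_0_nat[OF pr] by (intro power_increasing) auto
  ultimately show ?thesis using qdef by simp
qed

lemma fadd: "((x::'a) + y) ^ (q^i) = x ^ (q^i) + y ^ (q^i)"
  using frob_add[OF pr k1 h2] cardF qdef by simp

lemma fsum: "(sum (g::'b \<Rightarrow> 'a) A) ^ (q^i) = (\<Sum>j\<in>A. g j ^ (q^i))"
  using frob_sum[OF pr k1 h2] cardF qdef by simp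

lemma fneg: "(- (x::'a)) ^ (q^i) = - (x ^ (q^i))"
  using frob_neg[OF pr k1 h2] cardF qdef by simp

lemma fQ: "(x::'a) ^ (q^h) = x"
  using pow_card_same[of x] cardF by simp

lemma fadd1: "((x::'a) + y) ^ q = x ^ q + y ^ q"
  using fadd[of x y 1] by simp

lemma fneg1: "(- (x::'a)) ^ q = - (x ^ q)"
  using fneg[of x 1] by simp

lemma Kq_pow: "(t::'a) \<in> Kq q \<Longrightarrow> t ^ (q ^ i) = t"
proof (induction i)
  case 0 then show ?case by simp
next
  case (Suc i)
  have "q ^ Suc i = q ^ i * q" by simp
  then have "t ^ (q ^ Suc i) = (t ^ (q ^ i)) ^ q" by (simp only: power_mult)
  also have "\<dots> = t" using Suc by (simp add: Kq_def)
  finally show ?case .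
qed

lemma Kq_0: "(0::'a) \<in> Kq q" using q2 by (simp add: Kq_def)
lemma Kq_1: "(1::'a) \<in> Kq q" by (simp add: Kq_def)
lemma Kq_add: "(t::'a) \<in> Kq q \<Longrightarrow> s \<in> Kq q \<Longrightarrow> t + s \<in> Kq q"
  by (simp add: Kq_def fadd1)
lemma Kq_neg: "(t::'a) \<in> Kq q \<Longrightarrow> - t \<in> Kq q"
  by (simp add: Kq_def fneg1)
lemma Kq_diff: "(t::'a) \<in> Kq q \<Longrightarrow> s \<in> Kq q \<Longrightarrow> t - s \<in> Kq q"
  using Kq_add[of t "- s"] Kq_neg[of s] by simp
lemma Kq_mult: "(t::'a) \<in> Kq q \<Longrightarrow> s \<in> Kq q \<Longrightarrow> t * s \<in> Kq q"
  by (simp add: Kq_def power_mult_distrib)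
lemma Kq_inv: "(t::'a) \<in> Kq q \<Longrightarrow> inverse t \<in> Kq q"
  by (simp add: Kq_def power_inverse)
lemma Kq_div: "(t::'a) \<in> Kq q \<Longrightarrow> s \<in> Kq q \<Longrightarrow> t / s \<in> Kq q"
  using Kq_mult Kq_inv by (simp add: divide_inverse)

lemma Kq_card: "card (Kq q :: 'a set) \<le> q"
proof -
  define P :: "'a poly" where "P = monom 1 q - monom 1 1"
  have "coeff P q = 1" using q2 by (simp add: P_def coeff_monom)
  then have P0: "P \<noteq> 0" by auto
  have "degree P \<le> q" unfolding P_def
    by (rule order.trans[OF degree_diff_le_max]) (use q2 in \<open>auto simp: degree_monom_eq\<close>)
  moreover have "{x. poly P x = 0} = Kq q" by (auto simp: P_def Kq_def poly_monom)
  ultimately show ?thesis using card_poly_roots_bound[OF P0] by simp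
qed

lemma trf_add: "trf q h c ((x::'a) + y) = trf q h c x + trf q h c y"
  by (simp add: trf_def distrib_left fadd sum.distrib)

lemma trf_0: "trf q h c (0::'a) = 0"
  using q2 by (simp add: trf_def power_0_left)

lemma trf_neg: "trf q h c (- (x::'a)) = - trf q h c x"
proof -
  have "trf q h c x + trf q h c (- x) = 0" using trf_add[of c x "- x"] trf_0[of c] by simp
  then show ?thesis by (simp add: add_eq_0_iff)
qed

lemma trf_diff: "trf q h c ((x::'a) - y) = trf q h c x - trf q h c y"
  using trf_add[of c x "- y"] trf_neg[of c y] by simp

lemma trf_smul: "(t::'a) \<in> Kq q \<Longrightarrow> trf q h c (t * x) = t * trf q h c x"
proof -
  assume t: "t \<in> Kq q"
  have "trf q h c (t * x) = (\<Sum>i<h. t ^ (q^i) * (c * x) ^ (q^i))"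
    by (simp add: trf_def power_mult_distrib mult_ac)
  also have "\<dots> = (\<Sum>i<h. t * (c * x) ^ (q^i))" using Kq_pow[OF t] by simp
  finally show ?thesis by (simp add: trf_def sum_distrib_left)
qed

lemma trf_Kq: "trf q h c (x::'a) \<in> Kq q"
proof -
  define g where "g i = (c * x) ^ (q ^ i)" for i
  obtain h' where hh: "h = Suc h'" using h2 by (cases h) auto
  have "(trf q h c x) ^ q = (\<Sum>i<h. g i ^ q)" unfolding trf_def g_def using fsum[of _ _ 1] by simp
  also have "\<dots> = (\<Sum>i<h. g (Suc i))" by (simp add: g_def power_mult[symmetric] mult.commute)
  also have "\<dots> = (\<Sum>i<h. g i) + g h - g 0"
  proof -
    have "g 0 + (\<Sum>i<h. g (Suc i)) = (\<Sum>i<h. g i) + g h"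
      using sum.lessThan_Suc_shift[of g h] sum.lessThan_Suc[of g h] by simp
    then show ?thesis by (simp add: algebra_simps)
  qed
  also have "g h = g 0" unfolding g_def using fQ by simp
  finally show ?thesis by (simp add: Kq_def trf_def g_def)
qed

lemma trf_ker_card:
  assumes c0: "(c::'a) \<noteq> 0"
  shows "card {x::'a. trf q h c x = 0} \<le> q ^ (h - 1)"
proof -
  define P :: "'a poly" where "P = (\<Sum>i<h. monom (c ^ (q ^ i)) (q ^ i))"
  have inj: "q ^ i = q ^ j \<longleftrightarrow> i = j" for i j using q2 by (simp add: power_inject_exp)
  have "coeff P (q ^ (h - 1)) = (\<Sum>i<h. if i = h - 1 then c ^ (q ^ i) else 0)"
    unfolding P_def coeff_sum by (intro sum.cong) (auto simp: coeff_monom inj)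
  also have "\<dots> = c ^ (q ^ (h - 1))" using h2 by simp
  finally have "coeff P (q ^ (h - 1)) \<noteq> 0" using c0 by simp
  then have P0: "P \<noteq> 0" by auto
  have "degree P \<le> q ^ (h - 1)" unfolding P_def
  proof (rule degree_sum_le)
    fix i assume "i \<in> {..<h}"
    then have "q ^ i \<le> q ^ (h - 1)" using q2 by (intro power_increasing) auto
    then show "degree (monom (c ^ q ^ i) (q ^ i)) \<le> q ^ (h - 1)"
      using degree_monom_le order.trans by blast
  qed simp
  moreover have "{x. poly P x = 0} = {x. trf q h c x = 0}"
    by (simp add: P_def trf_def poly_sum poly_monom power_mult_distrib)
  ultimately show ?thesis using card_poly_roots_bound[OF P0] by simp
qed

end

definition smul :: "'a::field \<Rightarrow> 'a \<times> 'a \<times> 'a \<Rightarrow> 'a \<times> 'a \<times> 'a" where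
  "smul c v = (c * fst v, c * fst (snd v), c * snd (snd v))"

definition vsub :: "'a::field \<times> 'a \<times> 'a \<Rightarrow> 'a \<times> 'a \<times> 'a \<Rightarrow> 'a \<times> 'a \<times> 'a" where
  "vsub u v = (fst u - fst v, fst (snd u) - fst (snd v), snd (snd u) - snd (snd v))"

definition dot :: "'a::field \<times> 'a \<times> 'a \<Rightarrow> 'a \<times> 'a \<times> 'a \<Rightarrow> 'a" where
  "dot a v = fst a * fst v + fst (snd a) * fst (snd v) + snd (snd a) * snd (snd v)"

lemma pp_self: "v \<in> pg_point v"
  unfolding pg_point_def by (cases v) (auto intro: exI[of _ 1])

lemma pp_eq:
  assumes "pg_point u = pg_point (v::'a::field \<times> 'a \<times> 'a)"
  shows "\<exists>c. c \<noteq> 0 \<and> u = smul c v"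
proof -
  have "u \<in> pg_point v" using pp_self[of u] assms by simp
  then show ?thesis unfolding pg_point_def smul_def by auto
qed

lemma pp_scale:
  assumes c: "(c::'a::field) \<noteq> 0"
  shows "pg_point (smul c v) = pg_point v"
proof
  show "pg_point (smul c v) \<subseteq> pg_point v"
  proof
    fix w assume "w \<in> pg_point (smul c v)"
    then obtain e where e: "e \<noteq> 0" "w = (e * (c * fst v), e * (c * fst (snd v)), e * (c * snd (snd v)))"
      unfolding pg_point_def smul_def by auto
    then show "w \<in> pg_point v" unfolding pg_point_def using c
      by (auto intro!: exI[of _ "e * c"] simp: mult.assoc)
  qed
next
  show "pg_point v \<subseteq> pg_point (smul c v)"
  proof
    fix w assume "w \<in> pg_point v"
    then obtain e where e: "e \<noteq> 0" "w = (e * fst v, e * fst (snd v), e * snd (snd v))"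
      unfolding pg_point_def by auto
    then show "w \<in> pg_point (smul c v)" unfolding pg_point_def smul_def using c
      by (auto intro!: exI[of _ "e / c"])
  qed
qed

lemma pp_in_points: "v \<noteq> (0,0,0) \<Longrightarrow> pg_point v \<in> pg_points"
  unfolding pg_points_def by auto

lemma pp_on_line: "v \<noteq> (0,0,0) \<Longrightarrow> dot a v = 0 \<Longrightarrow> pg_point v \<in> pg_line a"
  unfolding pg_line_def dot_def by (cases v) auto

lemma dot_vsub: "dot a (vsub u v) = dot a u - dot a v"
  by (simp add: dot_def vsub_def algebra_simps)

lemma two_points:
  assumes "finite B" "P1 \<in> B \<inter> L" "P2 \<in> B \<inter> L" "P1 \<noteq> P2"
  shows "card (B \<inter> L) \<ge> 2"
proof -
  have "card {P1, P2} \<le> card (B \<inter> L)" using assms by (intro card_mono) auto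
  then show ?thesis using assms(4) by simp
qed

definition Bset :: "('a::field \<Rightarrow> 'a) \<Rightarrow> ('a \<times> 'a \<times> 'a \<Rightarrow> 'a \<times> 'a \<times> 'a) \<Rightarrow> 'a set
    \<Rightarrow> ('a \<times> 'a \<times> 'a) set set" where
  "Bset f \<sigma> K = {pg_point (\<sigma> (x, f x, z)) | x z. z \<in> K \<and> (x, z) \<noteq> (0, 0)}"

lemma Bset_points:
  assumes inj: "\<And>v. \<sigma> v = (0,0,0) \<Longrightarrow> v = (0,0,0)"
  shows "Bset f \<sigma> K \<subseteq> pg_points"
proof
  fix P assume "P \<in> Bset f \<sigma> K"
  then obtain x z where P: "P = pg_point (\<sigma> (x, f x, z))" "(x, z) \<noteq> (0, 0)"
    unfolding Bset_def by auto
  then have "\<sigma> (x, f x, z) \<noteq> (0,0,0)" using inj[of "(x, f x, z)"] by auto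
  then show "P \<in> pg_points" using P pp_in_points by simp
qed

lemma Bset_block:
  fixes f :: "'a::{finite,field} \<Rightarrow> 'a"
  assumes fsub: "\<And>x y. f (x - y) = f x - f y"
    and ssub: "\<And>u v. \<sigma> (vsub u v) = vsub (\<sigma> u) (\<sigma> v)"
    and inj: "\<And>v. \<sigma> v = (0,0,0) \<Longrightarrow> v = (0,0,0)"
    and Ksub: "\<And>s t. s \<in> K \<Longrightarrow> t \<in> K \<Longrightarrow> s - t \<in> K"
    and K0: "0 \<in> K" and K1: "1 \<in> K"
    and L: "L \<in> pg_lines"
  shows "\<exists>P. P \<in> Bset f \<sigma> K \<inter> L"
proof -
  obtain a where a: "L = pg_line a" using L unfolding pg_lines_def by auto
  define \<phi> where "\<phi> xz = dot a (\<sigma> (fst xz, f (fst xz), snd xz))" for xz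
  have fin: "finite (UNIV \<times> K :: ('a \<times> 'a) set)" by simp
  have "K \<supseteq> {0, 1}" using K0 K1 by auto
  then have "card K \<ge> 2" using card_mono[of K "{0::'a,1}"] by simp
  then have "card (UNIV \<times> K :: ('a \<times> 'a) set) > card (UNIV :: 'a set)"
    using finite_UNIV_card_ge_0[where ?'a='a] by (simp add: card_cartesian_product)
  moreover have "card (\<phi> ` (UNIV \<times> K)) \<le> card (UNIV :: 'a set)"
    by (intro card_mono) auto
  ultimately have "\<not> inj_on \<phi> (UNIV \<times> K)" using card_image by fastforce
  then obtain x z x' z' where xz: "z \<in> K" "z' \<in> K" "(x, z) \<noteq> (x', z')" "\<phi> (x, z) = \<phi> (x', z')"
    unfolding inj_on_def by auto
  define v where "v = (x - x', f (x - x'), z - z')"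
  have "v = vsub (x, f x, z) (x', f x', z')" by (simp add: v_def vsub_def fsub)
  then have "\<sigma> v = vsub (\<sigma> (x, f x, z)) (\<sigma> (x', f x', z'))" using ssub by simp
  then have d0: "dot a (\<sigma> v) = 0" using xz(4) by (simp add: dot_vsub \<phi>_def)
  have "(x - x', z - z') \<noteq> (0, 0)" using xz(3) by auto
  moreover have "z - z' \<in> K" using Ksub xz by simp
  ultimately have "pg_point (\<sigma> v) \<in> Bset f \<sigma> K" unfolding Bset_def v_def by blast
  moreover have "v \<noteq> (0,0,0)" using \<open>(x - x', z - z') \<noteq> (0, 0)\<close> by (auto simp: v_def)
  then have "\<sigma> v \<noteq> (0,0,0)" using inj by blast
  then have "pg_point (\<sigma> v) \<in> L" using pp_on_line d0 a by simp
  ultimately show ?thesis by blast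
qed

lemma Bset_card:
  fixes f :: "'a::{finite,field} \<Rightarrow> 'a"
  assumes fK: "\<And>t x. t \<in> K \<Longrightarrow> f (t * x) = t * f x"
    and fvals: "\<And>x. f x \<in> K"
    and Kinv: "\<And>t. t \<in> K \<Longrightarrow> inverse t \<in> K"
    and slin: "\<And>c v. \<sigma> (smul c v) = smul c (\<sigma> v)"
  shows "card (Bset f \<sigma> K) \<le> card (UNIV :: 'a set) + card {x. f x = 1} + 1"
proof -
  define A1 where "A1 = (\<lambda>y. pg_point (\<sigma> (y, f y, 1))) ` UNIV"
  define A2 where "A2 = (\<lambda>d. pg_point (\<sigma> (1, d, 0))) ` insert 0 (inverse ` {x. f x = 1})"
  have sub: "Bset f \<sigma> K \<subseteq> A1 \<union> A2"
  proof
    fix P assume "P \<in> Bset f \<sigma> K"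
    then obtain x z where P: "P = pg_point (\<sigma> (x, f x, z))" "(x, z) \<noteq> (0, 0)" "z \<in> K"
      unfolding Bset_def by auto
    show "P \<in> A1 \<union> A2"
    proof (cases "z = 0")
      case False
      have "f (x / z) = f (inverse z * x)" by (simp add: divide_inverse mult.commute)
      also have "\<dots> = inverse z * f x" using fK Kinv P(3) by simp
      finally have fz: "f (x / z) = f x / z" by (simp add: divide_inverse mult.commute)
      have "(x, f x, z) = smul z (x / z, f (x / z), 1)" using False by (simp add: smul_def fz)
      then have "P = pg_point (smul z (\<sigma> (x / z, f (x / z), 1)))" using P slin by simp
      also have "\<dots> = pg_point (\<sigma> (x / z, f (x / z), 1))" using pp_scale False by blast
      finally show ?thesis unfolding A1_def by blast
    next
      case True
      then have x0: "x \<noteq> 0" using P by auto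
      have eq: "(x, f x, z) = smul x (1, f x / x, 0)" using True x0 by (simp add: smul_def)
      have "P = pg_point (smul x (\<sigma> (1, f x / x, 0)))" using P eq slin by simp
      also have "\<dots> = pg_point (\<sigma> (1, f x / x, 0))" using pp_scale x0 by blast
      finally have Pd: "P = pg_point (\<sigma> (1, f x / x, 0))" .
      have "f x / x \<in> insert 0 (inverse ` {x. f x = 1})"
      proof (cases "f x = 0")
        case True then show ?thesis by simp
      next
        case False
        have "f (x / f x) = f (inverse (f x) * x)" by (simp add: divide_inverse mult.commute)
        also have "\<dots> = inverse (f x) * f x" using fK Kinv fvals by simp
        also have "\<dots> = 1" using False by simp
        finally have "x / f x \<in> {x. f x = 1}" by simp
        moreover have "f x / x = inverse (x / f x)" by simp
        ultimately show ?thesis by blast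
      qed
      then show ?thesis using Pd unfolding A2_def by blast
    qed
  qed
  have "card A1 \<le> card (UNIV :: 'a set)" unfolding A1_def by (rule card_image_le) simp
  moreover have "card A2 \<le> card {x. f x = 1} + 1"
  proof -
    have "card A2 \<le> card (insert 0 (inverse ` {x. f x = 1}))" unfolding A2_def by (rule card_image_le) simp
    also have "\<dots> \<le> card (inverse ` {x. f x = 1}) + 1" by (simp add: card_insert_if)
    also have "card (inverse ` {x. f x = 1}) \<le> card {x. f x = 1}" by (rule card_image_le) simp
    finally show ?thesis by simp
  qed
  moreover have "card (Bset f \<sigma> K) \<le> card (A1 \<union> A2)" using sub by (intro card_mono) auto
  moreover have "card (A1 \<union> A2) \<le> card A1 + card A2" by (rule card_Un_le)
  ultimately show ?thesis by linarith
qed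


definition sig2 :: "'a::field \<Rightarrow> 'a \<Rightarrow> 'a \<Rightarrow> 'a \<times> 'a \<times> 'a \<Rightarrow> 'a \<times> 'a \<times> 'a" where
  "sig2 e1 e2 th v = (snd (snd v), fst v + e1 * fst (snd v) + e2 * snd (snd v), fst (snd v) - th * snd (snd v))"

lemma sig2_lin: "sig2 e1 e2 th (smul c v) = smul c (sig2 e1 e2 th v)"
  by (simp add: sig2_def smul_def algebra_simps)

lemma sig2_sub: "sig2 e1 e2 th (vsub u v) = vsub (sig2 e1 e2 th u) (sig2 e1 e2 th v)"
  by (simp add: sig2_def vsub_def algebra_simps)

lemma sig2_inj: "sig2 e1 e2 th v = (0,0,0) \<Longrightarrow> v = (0,0,0)"
  by (cases v) (auto simp: sig2_def)

lemma Bset_disj: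
  fixes f :: "'a::field \<Rightarrow> 'a"
  assumes fK: "\<And>t x. t \<in> K \<Longrightarrow> f (t * x) = t * f x"
    and fadd: "\<And>x y. f (x + y) = f x + f y"
    and fvals: "\<And>x. f x \<in> K"
    and K1: "1 \<in> K"
    and Kmult: "\<And>s t. s \<in> K \<Longrightarrow> t \<in> K \<Longrightarrow> s * t \<in> K"
    and Kinv: "\<And>t. t \<in> K \<Longrightarrow> inverse t \<in> K"
    and thK: "th \<notin> K" and fth: "f th = 0"
    and kap: "1 + f e1 \<noteq> 0"
    and eb: "\<And>b. b \<in> K \<Longrightarrow> f e2 \<noteq> b * (f 1 * f (inverse (b - th)) - (1 + f e1))"
  shows "Bset f (\<lambda>v. v) K \<inter> Bset f (sig2 e1 e2 th) K = {}"
proof (rule ccontr)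
  have Kdiv: "s \<in> K \<Longrightarrow> t \<in> K \<Longrightarrow> s / t \<in> K" for s t
    using Kmult Kinv by (simp add: divide_inverse)
  have f0: "f 0 = 0" using fadd[of 0 0] by (metis add.right_neutral add_left_cancel)
  have fdiff: "f (x - y) = f x - f y" for x y
  proof -
    have "f (x - y) + f y = f x" using fadd[of "x - y" y] by simp
    then show ?thesis by (simp add: algebra_simps)
  qed
  have fKr: "t \<in> K \<Longrightarrow> f (x * t) = t * f x" for t x using fK by (simp add: mult.commute)
  have fk1: "t \<in> K \<Longrightarrow> f t = t * f 1" for t using fK[of t 1] by simp
  assume "Bset f (\<lambda>v. v) K \<inter> Bset f (sig2 e1 e2 th) K \<noteq> {}"
  then obtain P where P1: "P \<in> Bset f (\<lambda>v. v) K" and P2: "P \<in> Bset f (sig2 e1 e2 th) K" by blast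
  obtain x z where X: "P = pg_point (x, f x, z)" "(x, z) \<noteq> (0, 0)" "z \<in> K"
    using P1 unfolding Bset_def by auto
  obtain x' z' where X': "P = pg_point (sig2 e1 e2 th (x', f x', z'))" "(x', z') \<noteq> (0, 0)" "z' \<in> K"
    using P2 unfolding Bset_def by auto
  obtain l where l: "l \<noteq> 0" "sig2 e1 e2 th (x', f x', z') = smul l (x, f x, z)"
    using pp_eq[of "sig2 e1 e2 th (x', f x', z')" "(x, f x, z)"] X X' by auto
  define t t' where "t = f x" and "t' = f x'"
  have s1: "sig2 e1 e2 th (x', f x', z') = (z', x' + e1 * t' + e2 * z', t' - th * z')"
    by (simp add: sig2_def t'_def)
  have s2: "smul l (x, f x, z) = (l * x, l * t, l * z)" by (simp add: smul_def t_def)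
  have "(z', x' + e1 * t' + e2 * z', t' - th * z') = (l * x, l * t, l * z)"
    using l(2) unfolding s1 s2 .
  then have eqs: "z' = l * x \<and> x' + e1 * t' + e2 * z' = l * t \<and> t' - th * z' = l * z"
    unfolding prod.inject .
  from eqs have e1: "z' = l * x" by blast
  from eqs have e2: "x' + e1 * t' + e2 * z' = l * t" by blast
  from eqs have e3: "t' - th * z' = l * z" by blast
  have tK: "t \<in> K" "t' \<in> K" using fvals by (simp_all add: t_def t'_def)
  show False
  proof (cases "z = 0")
    case True
    then have tt: "t' = th * z'" using e3 by simp
    have "z' = 0"
    proof (rule ccontr)
      assume "z' \<noteq> 0"
      then have "th = t' / z'" using tt by simp
      then show False using thK Kdiv tK X'(3) by simp
    qed
    then have "x = 0" using e1 l by simp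
    then show False using X True by simp
  next
    case False
    have "f (x' + e1 * t' + e2 * z') = t' + t' * f e1 + z' * f e2"
      using fadd fKr tK X'(3) by (simp add: t'_def)
    also have "f (x' + e1 * t' + e2 * z') = t * f l" using e2 fKr tK by simp
    finally have key0: "t' + t' * f e1 + z' * f e2 = t * f l" ..
    have lz: "l = inverse z * (t' - th * z')" using e3 False by simp
    have fzth: "f (z' * th) = 0" using fK[of z' th] X'(3) fth by simp
    have "f l = inverse z * (f t' - f (z' * th))" using lz fK Kinv X(3) False fdiff by (simp add: mult.commute)
    also have "\<dots> = inverse z * (t' * f 1)" using fk1 tK fzth by simp
    finally have fl: "f l = inverse z * (t' * f 1)" .
    show False
    proof (cases "z' = 0")
      case True
      then have "x = 0" using e1 l by simp
      then have "t = 0" using f0 by (simp add: t_def)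
      then have "t' * (1 + f e1) = 0" using key0 True by (simp add: algebra_simps)
      then have "t' = 0" using kap by simp
      then show False using e3 True l False by simp
    next
      case z'0: False
      define b where "b = t' / z'"
      have bK: "b \<in> K" using Kdiv tK X'(3) by (simp add: b_def)
      have bth: "b - th \<noteq> 0" using bK thK by auto
      have t'b: "t' = b * z'" using z'0 by (simp add: b_def)
      have "t' - th * z' = z' * (b - th)" using t'b by (simp add: algebra_simps)
      then have il: "inverse l = (z / z') * inverse (b - th)" using e3 l False z'0 bth
        by (simp add: field_simps)
      have "x = z' * inverse l" using e1 l by (simp add: field_simps)
      then have "t = z' * f (inverse l)" using fKr X'(3) by (simp add: t_def mult.commute)
      also have "f (inverse l) = (z / z') * f (inverse (b - th))"
        unfolding il by (rule fK) (use Kdiv X(3) X'(3) in simp)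
      finally have tt: "t = z * f (inverse (b - th))" using z'0 by simp
      have "z' * (b + b * f e1 + f e2) = z' * (b * (f 1 * f (inverse (b - th))))"
        using key0 unfolding tt fl t'b using False by (simp add: field_simps)
      then have "b + b * f e1 + f e2 = b * (f 1 * f (inverse (b - th)))" using z'0 by simp
      then have "f e2 = b * (f 1 * f (inverse (b - th)) - (1 + f e1))" by (simp add: algebra_simps)
      then show False using eb bK by blast
    qed
  qed
qed


lemma pad:
  assumes "finite X" "A \<subseteq> X" "card A \<le> n" "n \<le> card X"
  shows "\<exists>B. A \<subseteq> B \<and> B \<subseteq> X \<and> card B = n"
proof -
  have fA: "finite A" using assms finite_subset by blast
  have "card (X - A) = card X - card A" using assms fA by (simp add: card_Diff_subset)
  then have "n - card A \<le> card (X - A)" using assms by simp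
  then obtain C where C: "C \<subseteq> X - A" "card C = n - card A"
    using obtain_subset_with_card_n by metis
  have fC: "finite C" using C assms finite_subset by (metis finite_Diff)
  have "card (A \<union> C) = card A + card C" using C fA fC by (intro card_Un_disjoint) auto
  then show ?thesis using C assms by (intro exI[of _ "A \<union> C"]) auto
qed

lemma card_points_ge: "card (pg_points :: ('a::{finite,field} \<times> 'a \<times> 'a) set set) \<ge> card (UNIV :: 'a set) ^ 2"
proof -
  define g :: "'a \<times> 'a \<Rightarrow> ('a \<times> 'a \<times> 'a) set" where "g xy = pg_point (fst xy, snd xy, 1)" for xy
  have "inj_on g UNIV"
  proof (rule inj_onI)
    fix u v assume "g u = g v"
    then obtain c where "c \<noteq> 0" "(fst u, snd u, 1) = smul c (fst v, snd v, 1)"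
      using pp_eq unfolding g_def by blast
    then show "u = v" by (cases u, cases v) (simp add: smul_def)
  qed
  then have "card (g ` UNIV) = card (UNIV :: ('a \<times> 'a) set)" by (rule card_image)
  also have "\<dots> = card (UNIV :: 'a set) ^ 2"
    by (simp add: card_cartesian_product power2_eq_square flip: UNIV_Times_UNIV)
  finally have e: "card (g ` UNIV) = card (UNIV :: 'a set) ^ 2" .
  have "g xy \<in> pg_points" for xy unfolding g_def by (rule pp_in_points) simp
  then have "g ` UNIV \<subseteq> pg_points" by blast
  then have "card (g ` UNIV) \<le> card (pg_points :: ('a \<times> 'a \<times> 'a) set set)" by (intro card_mono) auto
  then show ?thesis using e by simp
qed

lemma assemble:
  fixes B0 :: "('a::{finite,field} \<times> 'a \<times> 'a) set set"
  assumes "B0 \<subseteq> pg_points" "\<forall>L\<in>pg_lines. card (B0 \<inter> L) \<ge> 2"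
    "card B0 \<le> n" "n \<le> card (UNIV :: 'a set) ^ 2"
  shows "\<exists>B :: ('a \<times> 'a \<times> 'a) set set. fold_blocking_set 2 B \<and> card B = n"
proof -
  have fin: "finite (pg_points :: ('a \<times> 'a \<times> 'a) set set)"
    by (rule finite_subset[OF subset_UNIV]) (rule finite_UNIV)
  have "n \<le> card (pg_points :: ('a \<times> 'a \<times> 'a) set set)"
    using assms(4) card_points_ge[where ?'a='a] by (rule order.trans)
  then obtain B where B: "B0 \<subseteq> B" "B \<subseteq> pg_points" "card B = n"
    using pad[OF fin assms(1) assms(3)] by blast
  have "\<forall>L\<in>pg_lines. card (B \<inter> L) \<ge> 2"
  proof
    fix L :: "('a \<times> 'a \<times> 'a) set set" assume "L \<in> pg_lines"
    then have "card (B0 \<inter> L) \<ge> 2" by (rule bspec[OF assms(2)])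
    moreover have "card (B0 \<inter> L) \<le> card (B \<inter> L)"
      by (rule card_mono) (simp, use B(1) in blast)
    ultimately show "card (B \<inter> L) \<ge> 2" by simp
  qed
  then have "fold_blocking_set 2 B" unfolding fold_blocking_set_def using B(2) by blast
  then show ?thesis using B(3) by blast
qed

lemma disj_two:
  fixes B1 B2 :: "('a::{finite,field} \<times> 'a \<times> 'a) set set"
  assumes "B1 \<inter> B2 = {}" "\<forall>L\<in>pg_lines. \<exists>P. P \<in> B1 \<inter> L" "\<forall>L\<in>pg_lines. \<exists>P. P \<in> B2 \<inter> L"
  shows "\<forall>L\<in>pg_lines. card ((B1 \<union> B2) \<inter> L) \<ge> 2"
proof
  fix L :: "('a \<times> 'a \<times> 'a) set set" assume L: "L \<in> pg_lines"
  obtain P1 P2 where "P1 \<in> B1 \<inter> L" "P2 \<in> B2 \<inter> L" using assms L by blast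
  moreover have "P1 \<noteq> P2" using calculation assms(1) by blast
  ultimately show "card ((B1 \<union> B2) \<inter> L) \<ge> 2" by (intro two_points) auto
qed

lemma triangle:
  fixes Q :: nat
  assumes cardF: "card (UNIV :: 'a::{finite,field} set) = Q" and Q4: "Q \<ge> 4"
    and n: "3 * Q + 1 \<le> n" "n \<le> Q ^ 2"
  shows "\<exists>B :: ('a \<times> 'a \<times> 'a) set set. fold_blocking_set 2 B \<and> card B = n"
proof -
  define T1 :: "('a \<times> 'a \<times> 'a) set set" where "T1 = {pg_point (0, y, z) | y z. (y, z) \<noteq> (0, 0)}"
  define T2 :: "('a \<times> 'a \<times> 'a) set set" where
    "T2 = (\<lambda>z. pg_point (1, 0, z)) ` UNIV \<union> (\<lambda>y. pg_point (1, y, 0)) ` UNIV"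
  have diff01: "pg_point (0, u, w) \<noteq> pg_point (1, u', w')" for u w u' w' :: 'a
  proof
    assume "pg_point (0, u, w) = pg_point (1, u', w')"
    then obtain c where "c \<noteq> (0::'a)" "(0, u, w) = smul c (1, u', w')" using pp_eq by blast
    then show False by (simp add: smul_def)
  qed
  have T1sub: "T1 \<subseteq> insert (pg_point (0, 0, 1)) ((\<lambda>z. pg_point (0, 1, z)) ` UNIV)"
  proof
    fix P assume "P \<in> T1"
    then obtain y z where P: "P = pg_point (0, y, z)" "(y, z) \<noteq> (0, 0)" unfolding T1_def by auto
    show "P \<in> insert (pg_point (0, 0, 1)) ((\<lambda>z. pg_point (0, 1, z)) ` UNIV)"
    proof (cases "y = 0")
      case True
      then have "z \<noteq> 0" using P by simp
      then have "P = pg_point (smul z (0, 0, 1))" using P True by (simp add: smul_def)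
      then have "P = pg_point (0, 0, 1)" using pp_scale[OF \<open>z \<noteq> 0\<close>, of "(0, 0, 1)"] by simp
      then show ?thesis by simp
    next
      case False
      then have "P = pg_point (smul y (0, 1, z / y))" using P by (simp add: smul_def)
      then have "P = pg_point (0, 1, z / y)" using pp_scale[OF False, of "(0, 1, z / y)"] by simp
      then show ?thesis by blast
    qed
  qed
  have "card T1 \<le> Q + 1"
  proof -
    have "card T1 \<le> card (insert (pg_point (0, 0, 1)) ((\<lambda>z. pg_point (0, 1, z)) ` (UNIV :: 'a set)))"
      using T1sub by (intro card_mono) auto
    also have "\<dots> \<le> card ((\<lambda>z. pg_point (0, 1, z)) ` (UNIV :: 'a set)) + 1" by (simp add: card_insert_if)
    also have "card ((\<lambda>z. pg_point (0, 1, z)) ` (UNIV :: 'a set)) \<le> Q"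
      using cardF card_image_le[OF finite_UNIV, of "\<lambda>z::'a. pg_point (0, 1, z)"] by simp
    finally show ?thesis by simp
  qed
  moreover have "card T2 \<le> 2 * Q"
  proof -
    have "card T2 \<le> card ((\<lambda>z. pg_point (1, 0, z)) ` (UNIV :: 'a set)) + card ((\<lambda>y. pg_point (1, y, 0)) ` (UNIV :: 'a set))"
      unfolding T2_def by (rule card_Un_le)
    also have "\<dots> \<le> Q + Q"
      using cardF card_image_le[OF finite_UNIV, of "\<lambda>z::'a. pg_point (1, 0, z)"]
        card_image_le[OF finite_UNIV, of "\<lambda>y::'a. pg_point (1, y, 0)"] by simp
    finally show ?thesis by simp
  qed
  ultimately have cardT: "card (T1 \<union> T2) \<le> n" using card_Un_le[of T1 T2] n by linarith
  have T1p: "T1 \<subseteq> pg_points"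
  proof
    fix P assume "P \<in> T1"
    then obtain y z where P: "P = pg_point (0, y, z)" "(y, z) \<noteq> (0, 0)" unfolding T1_def by auto
    then have "(0, y, z) \<noteq> (0::'a, 0::'a, 0::'a)" by auto
    then show "P \<in> pg_points" unfolding P(1) by (rule pp_in_points)
  qed
  have a: "pg_point (1, 0, z) \<in> pg_points" for z :: 'a by (rule pp_in_points) simp
  have b: "pg_point (1, y, 0) \<in> pg_points" for y :: 'a by (rule pp_in_points) simp
  have T2p: "T2 \<subseteq> pg_points" unfolding T2_def using a b by blast
  have two: "\<forall>L\<in>pg_lines. card ((T1 \<union> T2) \<inter> L) \<ge> 2"
  proof
    fix L :: "('a \<times> 'a \<times> 'a) set set" assume "L \<in> pg_lines"
    then obtain a1 a2 a3 where L: "L = pg_line (a1, a2, a3)" unfolding pg_lines_def by auto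
    have fin: "finite (T1 \<union> T2)" by (rule finite_subset[OF subset_UNIV]) (rule finite_UNIV)
    show "card ((T1 \<union> T2) \<inter> L) \<ge> 2"
    proof (cases "a2 = 0 \<and> a3 = 0")
      case True
      have "pg_point (0, 1, 0) \<in> T1" unfolding T1_def
        by (rule CollectI, rule exI[of _ 1], rule exI[of _ 0]) simp
      moreover have "pg_point (0, 1, 0) \<in> L" unfolding L
        using True by (intro pp_on_line) (simp_all add: dot_def)
      ultimately have "pg_point (0, 1, 0) \<in> (T1 \<union> T2) \<inter> L" by blast
      moreover have "pg_point (0, 0, 1) \<in> T1" unfolding T1_def
        by (rule CollectI, rule exI[of _ 0], rule exI[of _ 1]) simp
      moreover have "pg_point (0, 0, 1) \<in> L" unfolding L
        using True by (intro pp_on_line) (simp_all add: dot_def)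
      ultimately have "pg_point (0, 1, 0) \<in> (T1 \<union> T2) \<inter> L" "pg_point (0, 0, 1) \<in> (T1 \<union> T2) \<inter> L" by blast+
      moreover have "pg_point (0, 1, 0) \<noteq> (pg_point (0, 0, 1) :: ('a \<times> 'a \<times> 'a) set)"
      proof
        assume "pg_point (0, 1, 0) = (pg_point (0, 0, 1) :: ('a \<times> 'a \<times> 'a) set)"
        then obtain c where "c \<noteq> (0::'a)" "(0, 1, 0) = smul c (0, 0, 1)" using pp_eq by blast
        then show False by (simp add: smul_def)
      qed
      ultimately show ?thesis by (rule two_points[OF fin])
    next
      case False
      have nz: "(0, a3, - a2) \<noteq> (0::'a, 0::'a, 0::'a)" using False by auto
      have "(a3, - a2) \<noteq> (0, 0)" using False by auto
      then have "pg_point (0, a3, - a2) \<in> T1" unfolding T1_def by blast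
      moreover have "dot (a1, a2, a3) (0, a3, - a2) = 0" by (simp add: dot_def algebra_simps)
      then have "pg_point (0, a3, - a2) \<in> L" unfolding L by (rule pp_on_line[OF nz])
      ultimately have P1: "pg_point (0, a3, - a2) \<in> (T1 \<union> T2) \<inter> L" by blast
      obtain P2 where P2: "P2 \<in> (T1 \<union> T2) \<inter> L" "P2 \<in> T2"
      proof (cases "a3 = 0")
        case True
        then have "a2 \<noteq> 0" using False by simp
        then have "pg_point (1, - a1 / a2, 0) \<in> L" unfolding L
          using pp_on_line[of "(1, - a1 / a2, 0)" "(a1,a2,a3)"] True by (auto simp: dot_def)
        moreover have "pg_point (1, - a1 / a2, 0) \<in> T2" unfolding T2_def by blast
        ultimately show ?thesis using that by blast
      next
        case False
        then have "pg_point (1, 0, - a1 / a3) \<in> L" unfolding L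
          using pp_on_line[of "(1, 0, - a1 / a3)" "(a1,a2,a3)"] by (auto simp: dot_def)
        moreover have "pg_point (1, 0, - a1 / a3) \<in> T2" unfolding T2_def by blast
        ultimately show ?thesis using that by blast
      qed
      obtain u w where "P2 = pg_point (1, u, w)" using P2(2) unfolding T2_def by blast
      then have "pg_point (0, a3, - a2) \<noteq> P2" using diff01 by simp
      then show ?thesis by (rule two_points[OF fin P1 P2(1)])
    qed
  qed
  have "T1 \<union> T2 \<subseteq> pg_points" using T1p T2p by blast
  moreover have "n \<le> card (UNIV :: 'a set) ^ 2" using n cardF by simp
  ultimately show ?thesis using assemble[OF _ two cardT] by blast
qed


lemma fiber_card:
  fixes f :: "'a::{finite,field} \<Rightarrow> 'a"
  assumes fdiff: "\<And>x y. f (x - y) = f x - f y"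
  shows "card {x. f x = t} \<le> card {x. f x = 0}"
proof (cases "{x. f x = t} = {}")
  case True then show ?thesis by simp
next
  case False
  then obtain x0 where x0: "f x0 = t" by auto
  have "inj_on (\<lambda>x. x - x0) {x. f x = t}" by (rule inj_onI) simp
  moreover have "(\<lambda>x. x - x0) ` {x. f x = t} \<subseteq> {x. f x = 0}" using fdiff x0 by auto
  ultimately show ?thesis by (intro card_inj_on_le) auto
qed

context
  fixes p k h q :: nat
  assumes pr: "prime p" and k1: "k \<ge> 1" and h2: "h \<ge> 2" and qdef: "q = p ^ k"
    and cardF: "card (UNIV :: 'a::{finite,field} set) = q ^ h"
begin

lemmas L = q2[OF pr k1 h2 qdef cardF] Kq_pow[OF pr k1 h2 qdef cardF]
  Kq_0[OF pr k1 h2 qdef cardF] Kq_1[OF pr k1 h2 qdef cardF] Kq_add[OF pr k1 h2 qdef cardF]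
  Kq_neg[OF pr k1 h2 qdef cardF] Kq_diff[OF pr k1 h2 qdef cardF] Kq_mult[OF pr k1 h2 qdef cardF]
  Kq_inv[OF pr k1 h2 qdef cardF] Kq_div[OF pr k1 h2 qdef cardF] Kq_card[OF pr k1 h2 qdef cardF]
  trf_add[OF pr k1 h2 qdef cardF] trf_0[OF pr k1 h2 qdef cardF] trf_diff[OF pr k1 h2 qdef cardF]
  trf_smul[OF pr k1 h2 qdef cardF] trf_Kq[OF pr k1 h2 qdef cardF] trf_ker_card[OF pr k1 h2 qdef cardF]

lemma main_q3:
  assumes q3: "q \<ge> 3"
  shows "\<exists>B :: ('a \<times> 'a \<times> 'a) set set. fold_blocking_set 2 B \<and> card B = 2 * (q ^ h + q ^ (h - 1) + 1)"
proof -
  note q2 = L(1)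
  let ?K = "Kq q :: 'a set"
  have KK0: "0 \<in> ?K" and KK1: "1 \<in> ?K" using L by auto
  have Kadd: "s \<in> ?K \<Longrightarrow> t \<in> ?K \<Longrightarrow> s + t \<in> ?K" for s t using L(5) by blast
  have Kdiff: "s \<in> ?K \<Longrightarrow> t \<in> ?K \<Longrightarrow> s - t \<in> ?K" for s t using L(7) by blast
  have Kmult: "s \<in> ?K \<Longrightarrow> t \<in> ?K \<Longrightarrow> s * t \<in> ?K" for s t using L(8) by blast
  have Kinv: "t \<in> ?K \<Longrightarrow> inverse t \<in> ?K" for t using L(9) by blast
  have Kcard: "card ?K \<le> q" using L(11) .
  have hpos: "q ^ (h - 1) < q ^ h" using q2 h2 by (intro power_strict_increasing) auto
  have qh: "q ^ h = q * q ^ (h - 1)" using h2 by (cases h) auto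
  have "card {x::'a. trf q h 1 x = 0} \<le> q ^ (h - 1)" using L(17)[of 1] by simp
  then have "{x::'a. trf q h 1 x = 0} \<noteq> UNIV" using hpos cardF by auto
  then obtain c0 :: 'a where c0: "trf q h 1 c0 \<noteq> 0" by auto
  have c00: "c0 \<noteq> 0" using c0 L(13)[of 1] by auto
  define f where "f = trf q h c0"
  define \<phi> where "\<phi> = f 1"
  have phi0: "\<phi> \<noteq> 0" using c0 by (simp add: \<phi>_def f_def trf_def)
  have fadd: "f (x + y) = f x + f y" for x y using L(12) by (simp add: f_def)
  have fdiff: "f (x - y) = f x - f y" for x y using L(14) by (simp add: f_def)
  have fK: "t \<in> ?K \<Longrightarrow> f (t * x) = t * f x" for t x using L(15) by (simp add: f_def)
  have fvals: "f x \<in> ?K" for x using L(16) by (simp add: f_def)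
  have f0: "f 0 = 0" using L(13) by (simp add: f_def)
  have Nc: "card {x. f x = 0} \<le> q ^ (h - 1)" using L(17)[OF c00] by (simp add: f_def)
  have fib: "card {x. f x = t} \<le> q ^ (h - 1)" for t
    using order.trans[OF fiber_card[of f t, OF fdiff] Nc] .
  have Sc: "card {x. f x = 1} \<le> q ^ (h - 1)" by (rule fib)
  have phiK: "\<phi> \<in> ?K" using fvals by (simp add: \<phi>_def)
  have fk1: "t \<in> ?K \<Longrightarrow> f t = t * \<phi>" for t using fK[of t 1] by (simp add: \<phi>_def)
  have "card (UNIV :: 'a set) \<le> card (range f) * q ^ (h - 1)"
  proof -
    have "(UNIV :: 'a set) = (\<Union>t\<in>range f. {x. f x = t})" by auto
    then have "card (UNIV :: 'a set) = card (\<Union>t\<in>range f. {x. f x = t})" by simp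
    also have "\<dots> \<le> (\<Sum>t\<in>range f. card {x. f x = t})" by (rule card_UN_le) simp
    also have "\<dots> \<le> (\<Sum>t\<in>range f. q ^ (h - 1))"
      by (rule sum_mono) (rule fib)
    also have "\<dots> = card (range f) * q ^ (h - 1)" by simp
    finally show ?thesis .
  qed
  then have "q * q ^ (h - 1) \<le> card (range f) * q ^ (h - 1)" using cardF qh by simp
  then have rq: "q \<le> card (range f)" using q2 by simp
  have rK: "range f \<subseteq> ?K" using fvals by auto
  then have "card (range f) \<le> card ?K" by (intro card_mono) simp_all
  then have Kq3: "card ?K \<ge> 3" using rq q3 by simp
  have "q ^ 1 < q ^ h" using q2 h2 by (intro power_strict_increasing) auto
  then have "card (range f) < card (UNIV :: 'a set)"
    using \<open>card (range f) \<le> card ?K\<close> Kcard cardF by simp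
  then have "\<not> inj f" using card_image[of f UNIV] by auto
  then obtain x y where xy: "x \<noteq> y" "f x = f y" unfolding inj_def by auto
  define th0 where "th0 = x - y"
  have th0: "f th0 = 0" "th0 \<noteq> 0" using xy fdiff by (auto simp: th0_def)
  have "\<exists>th. f th = 0 \<and> th \<noteq> 0 \<and> f (inverse (1 - th)) \<noteq> 0"
  proof (rule ccontr)
    assume "\<not> ?thesis"
    then have H: "\<And>th. f th = 0 \<Longrightarrow> th \<noteq> 0 \<Longrightarrow> f (inverse (1 - th)) = 0" by blast
    have claim: "f (inverse th) = \<phi>" if th: "f th = 0" "th \<noteq> 0" for th
    proof -
      have th1: "th \<noteq> 1" using th phi0 by (auto simp: \<phi>_def)
      define u where "u = inverse (1 - th)"
      have u: "f u = 0" "u \<noteq> 0" using H[OF th] th1 by (auto simp: u_def)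
      have u1: "u \<noteq> 1" using u phi0 by (auto simp: \<phi>_def)
      have "f (inverse (1 - u)) = 0" using H[OF u] .
      moreover have "inverse (1 - u) = 1 - inverse th" using th1 th(2)
        by (simp add: u_def field_simps)
      ultimately have "f 1 - f (inverse th) = 0" using fdiff by simp
      then show ?thesis by (simp add: \<phi>_def)
    qed
    have "?K \<subseteq> {0, 1}"
    proof
      fix c assume cK: "c \<in> ?K"
      show "c \<in> {0, 1}"
      proof (cases "c = 0")
        case False
        have "f (c * th0) = 0" using fK[OF cK] th0 by simp
        moreover have "c * th0 \<noteq> 0" using False th0 by simp
        ultimately have "f (inverse (c * th0)) = \<phi>" by (rule claim)
        moreover have "f (inverse (c * th0)) = inverse c * f (inverse th0)"
          using fK[OF Kinv[OF cK], of "inverse th0"] by simp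
        moreover have "f (inverse th0) = \<phi>" using claim th0 by blast
        ultimately have "inverse c * \<phi> = \<phi>" by simp
        then have "inverse c = 1" using phi0 by simp
        then show ?thesis by simp
      qed simp
    qed
    then have "card ?K \<le> card {0::'a, 1}" by (intro card_mono) simp_all
    then have "card ?K \<le> 2" by simp
    then show False using Kq3 by simp
  qed
  then obtain th where th: "f th = 0" "th \<noteq> 0" "f (inverse (1 - th)) \<noteq> 0" by blast
  have thK: "th \<notin> ?K"
  proof
    assume "th \<in> ?K"
    then have "f th = th * \<phi>" by (rule fk1)
    then show False using th phi0 by simp
  qed
  define \<kappa> where "\<kappa> = \<phi> * f (inverse (1 - th))"
  have kap0: "\<kappa> \<noteq> 0" using phi0 th by (simp add: \<kappa>_def)
  have kapK: "\<kappa> \<in> ?K" using Kmult phiK fvals by (simp add: \<kappa>_def)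
  define g where "g b = b * (\<phi> * f (inverse (b - th)) - \<kappa>)" for b
  have gK: "g b \<in> ?K" if "b \<in> ?K" for b
    unfolding g_def by (rule Kmult[OF that Kdiff[OF Kmult[OF phiK fvals] kapK]])
  have "\<not> inj_on g ?K"
  proof
    assume "inj_on g ?K"
    moreover have "g 0 = g 1" by (simp add: g_def \<kappa>_def)
    ultimately have "(0::'a) = 1" using KK0 KK1 unfolding inj_on_def by blast
    then show False by simp
  qed
  then have "card (g ` ?K) \<noteq> card ?K" using eq_card_imp_inj_on[of ?K g] by auto
  moreover have "card (g ` ?K) \<le> card ?K" by (rule card_image_le) simp
  ultimately have "\<not> ?K \<subseteq> g ` ?K"
  proof (intro notI)
    assume a1: "card (g ` ?K) \<noteq> card ?K" "card (g ` ?K) \<le> card ?K" and a2: "?K \<subseteq> g ` ?K"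
    have "card ?K \<le> card (g ` ?K)" using a2 by (intro card_mono) simp_all
    then show False using a1 by simp
  qed
  then obtain e where e: "e \<in> ?K" "e \<notin> g ` ?K" by blast
  define e1 where "e1 = (\<kappa> - 1) * inverse \<phi>"
  define e2 where "e2 = e * inverse \<phi>"
  have fip: "f (inverse \<phi>) = 1" using fk1[OF Kinv[OF phiK]] phi0 by simp
  have fe1: "f e1 = \<kappa> - 1" unfolding e1_def using fK[of "\<kappa> - 1" "inverse \<phi>"] Kdiff[OF kapK KK1] fip by simp
  have fe2: "f e2 = e" unfolding e2_def using fK[of e "inverse \<phi>"] e(1) fip by simp
  have kapE: "1 + f e1 \<noteq> 0" using fe1 kap0 by simp
  have eb: "f e2 \<noteq> b * (f 1 * f (inverse (b - th)) - (1 + f e1))" if "b \<in> ?K" for b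
  proof
    assume "f e2 = b * (f 1 * f (inverse (b - th)) - (1 + f e1))"
    then have "e = g b" using fe1 fe2 by (simp add: g_def \<phi>_def)
    then show False using e that by blast
  qed
  define B1 where "B1 = Bset f (\<lambda>v. v) ?K"
  define B2 where "B2 = Bset f (sig2 e1 e2 th) ?K"
  have disj: "B1 \<inter> B2 = {}" unfolding B1_def B2_def
    by (rule Bset_disj[OF fK fadd fvals KK1 Kmult Kinv thK th(1) kapE eb])
  have bl1: "\<forall>L\<in>pg_lines. \<exists>P. P \<in> B1 \<inter> L"
  proof
    fix L :: "('a \<times> 'a \<times> 'a) set set" assume L: "L \<in> pg_lines"
    show "\<exists>P. P \<in> B1 \<inter> L" unfolding B1_def
      by (rule Bset_block[OF fdiff _ _ Kdiff KK0 KK1 L]) simp_all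
  qed
  have bl2: "\<forall>L\<in>pg_lines. \<exists>P. P \<in> B2 \<inter> L"
  proof
    fix L :: "('a \<times> 'a \<times> 'a) set set" assume L: "L \<in> pg_lines"
    show "\<exists>P. P \<in> B2 \<inter> L" unfolding B2_def
      by (rule Bset_block[OF fdiff sig2_sub sig2_inj Kdiff KK0 KK1 L])
  qed
  have p1: "B1 \<subseteq> pg_points" unfolding B1_def by (rule Bset_points) simp
  have p2: "B2 \<subseteq> pg_points" unfolding B2_def by (rule Bset_points) (rule sig2_inj)
  have c1: "card B1 \<le> q ^ h + q ^ (h - 1) + 1" unfolding B1_def
    using Bset_card[OF fK fvals Kinv, of "\<lambda>v. v"] cardF Sc by simp
  have c2: "card B2 \<le> q ^ h + q ^ (h - 1) + 1" unfolding B2_def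
    using Bset_card[OF fK fvals Kinv sig2_lin[of e1 e2 th]] cardF Sc by simp
  have two: "\<forall>L\<in>pg_lines. card ((B1 \<union> B2) \<inter> L) \<ge> 2" by (rule disj_two[OF disj bl1 bl2])
  have cB: "card (B1 \<union> B2) \<le> 2 * (q ^ h + q ^ (h - 1) + 1)"
    using card_Un_le[of B1 B2] c1 c2 by simp
  have Q9: "q ^ h \<ge> 9"
  proof -
    have "q ^ 2 \<le> q ^ h" using q2 h2 by (intro power_increasing) auto
    moreover have "9 \<le> q ^ 2" using mult_le_mono[OF q3 q3] by (simp add: power2_eq_square)
    ultimately show ?thesis by linarith
  qed
  have "q ^ (h - 1) \<le> q ^ h" using hpos by linarith
  moreover have aux: "2 * (A + B + 1) \<le> 9 * A" if "B \<le> A" "9 \<le> A" for A B :: nat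
    using that by presburger
  ultimately have "2 * (q ^ h + q ^ (h - 1) + 1) \<le> 9 * q ^ h" using Q9 by blast
  also have "\<dots> \<le> q ^ h * q ^ h" using Q9 by (rule mult_le_mono1)
  also have "\<dots> = card (UNIV :: 'a set) ^ 2" using cardF by (simp add: power2_eq_square)
  finally have nle: "2 * (q ^ h + q ^ (h - 1) + 1) \<le> card (UNIV :: 'a set) ^ 2" .
  have sub: "B1 \<union> B2 \<subseteq> pg_points" using p1 p2 by blast
  show ?thesis by (rule assemble[OF sub two cB nle])
qed

end


theorem corollary3p6:
  fixes q h :: nat
  assumes "\<exists>p k. prime p \<and> k \<ge> 1 \<and> q = p ^ k"
    and "h \<ge> 2"
    and "card (UNIV :: 'a set) = q ^ h"
  shows "\<exists>B :: ('a::{finite,field} \<times> 'a \<times> 'a) set set.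
           fold_blocking_set 2 B \<and> card B = 2 * (q ^ h + q ^ (h - 1) + 1)"
proof -
  obtain p k where pk: "prime p" "k \<ge> 1" "q = p ^ k" using assms(1) by blast
  have hq2: "q \<ge> 2" by (rule q2[OF pk(1) pk(2) assms(2) pk(3) assms(3)])
  show ?thesis
  proof (cases "q = 2")
    case True
    have Q4: "q ^ h \<ge> 4"
    proof -
      have "q ^ 2 \<le> q ^ h" using hq2 assms(2) by (intro power_increasing) auto
      then show ?thesis using True by simp
    qed
    have "q ^ h = q * q ^ (h - 1)" using assms(2) by (cases h) auto
    then have e: "2 * (q ^ h + q ^ (h - 1) + 1) = 3 * q ^ h + 2" using True by simp
    have "4 * q ^ h \<le> q ^ h * q ^ h" using Q4 by (rule mult_le_mono1)
    then have le: "2 * (q ^ h + q ^ (h - 1) + 1) \<le> (q ^ h) ^ 2"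
      unfolding e power2_eq_square using Q4 by linarith
    have ge: "3 * q ^ h + 1 \<le> 2 * (q ^ h + q ^ (h - 1) + 1)" unfolding e by simp
    show ?thesis by (rule triangle[OF assms(3) Q4 ge le])
  next
    case False
    then have "q \<ge> 3" using hq2 by simp
    then show ?thesis by (rule main_q3[OF pk(1) pk(2) assms(2) pk(3) assms(3)])
  qed
qed

end
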